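(* Let $P,Q$ be distributions over $x=(x_1,\dots,x_d)\in\mathbb{R}^d$ such that under both $P$ and $Q$ every coordinate $x_i$ has law $\mathcal{N}(0,1)$ and every pair $(x_i,x_j)$ is two-dimensional Gaussian. Let $\Sigma_P=\mathbb{E}_P[xx^\top]$, $\Sigma_Q=\mathbb{E}_Q[xx^\top]$, and $\mathcal{F}=\{\sum_{i=1}^d f_i(x_i): \mathbb{E}_P[f_i(x_i)^2]<\infty\ \forall i\}$. Then $$\tau(P,Q,\mathcal{F})\le \sup_{n\ge 0}\ \sup_{v\in\mathbb{R}^d}\frac{v^\top \Sigma_Q^{\odot n}v}{v^\top \Sigma_P^{\odot n}v}.$$
   Context: $\tau(P,Q,\mathcal{F})=\sup_{f,g\in\mathcal{F}}\mathbb{E}_Q[(f(x)-g(x))^2]/\mathbb{E}_P[(f(x)-g(x))^2]$ with convention $0/0=0$ (same convention in the right-hand ratio). For a matrix $M$, $M^{\odot n}$ is the entrywise $n$-th power, $[M^{\odot n}]_{i,j}=([M]_{i,j})^n$ (so $M^{\odot 0}$ is the all-ones matrix). *)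

theory Defs
  imports "HOL-Probability.Probability"
begin

definition gaussian_rv :: "'a measure \<Rightarrow> ('a \<Rightarrow> real) \<Rightarrow> bool" where
  "gaussian_rv M X \<longleftrightarrow> X \<in> borel_measurable M \<and>
     (\<exists>\<mu> \<sigma>. (\<sigma> = 0 \<and> (AE x in M. X x = \<mu>)) \<or>
             (\<sigma> > 0 \<and> distributed M lborel X (normal_density \<mu> \<sigma>)))"

text \<open>Two real random variables are jointly (two-dimensional) Gaussian iff every
  linear combination of them is Gaussian (Cramer-Wold characterisation).\<close>
definition jointly_gaussian :: "'a measure \<Rightarrow> ('a \<Rightarrow> real) \<Rightarrow> ('a \<Rightarrow> real) \<Rightarrow> bool" where
  "jointly_gaussian M X Y \<longleftrightarrow> (\<forall>a b. gaussian_rv M (\<lambda>x. a * X x + b * Y x))"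

definition second_moment :: "(real^'d) measure \<Rightarrow> 'd \<Rightarrow> 'd \<Rightarrow> real" where
  "second_moment M i j = (\<integral>x. x$i * x$j \<partial>M)"

definition hadamard_pow :: "('d \<Rightarrow> 'd \<Rightarrow> real) \<Rightarrow> nat \<Rightarrow> 'd \<Rightarrow> 'd \<Rightarrow> real" where
  "hadamard_pow A n i j = (A i j) ^ n"

definition quad_form :: "('d::finite \<Rightarrow> 'd \<Rightarrow> real) \<Rightarrow> real^'d \<Rightarrow> real" where
  "quad_form A v = (\<Sum>i\<in>UNIV. \<Sum>j\<in>UNIV. v$i * A i j * v$j)"

definition ratio0 :: "ennreal \<Rightarrow> ennreal \<Rightarrow> ennreal" where
  "ratio0 a b = (if a = 0 then 0 else if b = 0 then \<top> else a / b)"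

definition tau :: "'a measure \<Rightarrow> 'a measure \<Rightarrow> ('a \<Rightarrow> real) set \<Rightarrow> ennreal" where
  "tau P Q F = (SUP f\<in>F. SUP g\<in>F.
      ratio0 (\<integral>\<^sup>+x. ennreal ((f x - g x)^2) \<partial>Q) (\<integral>\<^sup>+x. ennreal ((f x - g x)^2) \<partial>P))"

definition additive_class :: "(real^'d::finite) measure \<Rightarrow> (real^'d \<Rightarrow> real) set" where
  "additive_class P = {(\<lambda>x. \<Sum>i\<in>UNIV. fs i (x$i)) | fs.
      (\<forall>i. fs i \<in> borel_measurable borel \<and> (\<integral>\<^sup>+x. ennreal ((fs i (x$i))^2) \<partial>P) < \<top>)}"

end

theory Submission
  imports Defs "HOL-Analysis.Weierstrass_Theorems" "HOL-Analysis.Regularity" "HOL-Analysis.Continuous_Extension"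
begin


definition trm :: "real \<times> real \<times> real \<Rightarrow> real \<Rightarrow> real" where
  "trm p x = fst p * cos (snd (snd p) * x) + fst (snd p) * sin (snd (snd p) * x)"

definition trig :: "(real \<times> real \<times> real) list \<Rightarrow> real \<Rightarrow> real" where
  "trig L x = (\<Sum>p\<leftarrow>L. trm p x)"

definition tmul :: "real \<times> real \<times> real \<Rightarrow> real \<times> real \<times> real \<Rightarrow> (real \<times> real \<times> real) list" where
  "tmul p q = (case p of (a,b,s) \<Rightarrow> case q of (c,d,t) \<Rightarrow>
     [((a*c+b*d)/2, (b*c-a*d)/2, s-t), ((a*c-b*d)/2, (a*d+b*c)/2, s+t)])"

lemma trig_Nil[simp]: "trig [] x = 0" by (simp add: trig_def)
lemma trig_Cons[simp]: "trig (p#L) x = trm p x + trig L x" by (simp add: trig_def)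
lemma trig_append[simp]: "trig (L1@L2) x = trig L1 x + trig L2 x" by (simp add: trig_def)
lemma trig_concat: "trig (concat Ls) x = (\<Sum>L\<leftarrow>Ls. trig L x)"
  by (induction Ls) auto

lemma trm_mult: "trm p x * trm q x = trig (tmul p q) x"
proof -
  obtain a b s where p: "p = (a,b,s)" by (cases p) auto
  obtain c d t where q: "q = (c,d,t)" by (cases q) auto
  show ?thesis unfolding p q tmul_def trm_def
    by (simp add: trm_def cos_diff sin_diff cos_add sin_add algebra_simps add_divide_distrib diff_divide_distrib distrib_left distrib_right)
qed

definition lmul where "lmul L1 L2 = concat (map (\<lambda>p. concat (map (\<lambda>q. tmul p q) L2)) L1)"

lemma trm_trig_mult: "trm p x * trig L2 x = trig (concat (map (\<lambda>q. tmul p q) L2)) x"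
  by (induction L2) (auto simp: distrib_left trm_mult)

lemma trig_mult: "trig L1 x * trig L2 x = trig (lmul L1 L2) x"
  unfolding lmul_def by (induction L1) (auto simp: distrib_right trm_trig_mult)

definition lscale where "lscale c L = map (\<lambda>(a,b,s). (c*a, c*b, s)) L"
lemma trig_scale: "trig (lscale c L) x = c * trig L x"
  unfolding lscale_def by (induction L) (auto simp: trm_def algebra_simps)

lemma trig_const: "trig [(c,0,0)] x = c" by (simp add: trm_def)

lemma poly_sin_trig:
  assumes "real_polynomial_function p"
  shows "\<exists>L. \<forall>x. p (sin (w * x)) = trig L x"
  using assms
proof (induction p)
  case (linear f)
  then obtain c where "f = (\<lambda>x. x * c)" by (auto simp: real_bounded_linear)
  then show ?case by (intro exI[of _ "[(0,c,w)]"]) (auto simp: trm_def)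
next
  case (const c)
  then show ?case by (intro exI[of _ "[(c,0,0)]"]) (auto simp: trm_def)
next
  case (add f g)
  then obtain L1 L2 where "\<forall>x. f (sin (w * x)) = trig L1 x" "\<forall>x. g (sin (w * x)) = trig L2 x" by blast
  then show ?case by (intro exI[of _ "L1@L2"]) auto
next
  case (mult f g)
  then obtain L1 L2 where "\<forall>x. f (sin (w * x)) = trig L1 x" "\<forall>x. g (sin (w * x)) = trig L2 x" by blast
  then show ?case by (intro exI[of _ "lmul L1 L2"]) (auto simp: trig_mult)
qed



lemma trm_bound: "\<bar>trm p x\<bar> \<le> \<bar>fst p\<bar> + \<bar>fst (snd p)\<bar>"
proof -
  have "\<bar>fst p * cos (snd (snd p) * x)\<bar> \<le> \<bar>fst p\<bar>"
    by (simp add: abs_mult mult_left_le)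
  moreover have "\<bar>fst (snd p) * sin (snd (snd p) * x)\<bar> \<le> \<bar>fst (snd p)\<bar>"
    by (simp add: abs_mult mult_left_le)
  ultimately show ?thesis unfolding trm_def by linarith
qed

lemma trig_bound: "\<exists>B. \<forall>x. \<bar>trig L x\<bar> \<le> B"
proof (induction L)
  case Nil then show ?case by auto
next
  case (Cons p L)
  then obtain B where B: "\<forall>x. \<bar>trig L x\<bar> \<le> B" by auto
  show ?case
  proof (intro exI allI)
    fix x
    have "\<bar>trig (p#L) x\<bar> \<le> \<bar>trm p x\<bar> + \<bar>trig L x\<bar>" by simp
    also have "\<dots> \<le> (\<bar>fst p\<bar> + \<bar>fst (snd p)\<bar>) + B" using trm_bound B by (intro add_mono) auto
    finally show "\<bar>trig (p#L) x\<bar> \<le> (\<bar>fst p\<bar> + \<bar>fst (snd p)\<bar>) + B" .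
  qed
qed

lemma trm_cont: "continuous_on UNIV (trm p)"
  unfolding trm_def by (intro continuous_intros)

lemma trig_cont: "continuous_on UNIV (trig L)"
proof (induction L)
  case Nil then show ?case by (simp add: trig_def)
next
  case (Cons p L)
  have "trig (p#L) = (\<lambda>x. trm p x + trig L x)" by auto
  then show ?case using Cons trm_cont[of p] by (simp add: continuous_on_add)
qed

lemma trig_meas[measurable]: "trig L \<in> borel_measurable borel"
  using trig_cont by (rule borel_measurable_continuous_onI)

locale gdens = prob_space N for N :: "real measure" +
  assumes sN: "sets N = sets borel"
begin

lemma spN[simp]: "space N = UNIV"
  using sN sets_eq_imp_space_eq[OF sN] by simp

lemma measN: "f \<in> borel_measurable N \<longleftrightarrow> f \<in> borel_measurable borel"
  by (simp add: measurable_cong_sets[OF sN refl])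

definition sqi :: "(real \<Rightarrow> real) \<Rightarrow> bool" where
  "sqi f \<longleftrightarrow> f \<in> borel_measurable borel \<and> integrable N (\<lambda>x. (f x)\<^sup>2)"

definition apx :: "(real \<Rightarrow> real) \<Rightarrow> bool" where
  "apx f \<longleftrightarrow> (\<forall>e>0. \<exists>L. (\<integral>x. (f x - trig L x)\<^sup>2 \<partial>N) < e)"

lemma sqi_bounded:
  assumes "f \<in> borel_measurable borel" "\<And>x. \<bar>f x\<bar> \<le> B"
  shows "sqi f"
  unfolding sqi_def
proof (intro conjI assms)
  have "\<bar>(f x)\<^sup>2\<bar> \<le> B\<^sup>2" for x
    using assms(2)[of x] abs_le_square_iff[of "f x" B] by auto
  moreover have "(\<lambda>x. (f x)\<^sup>2) \<in> borel_measurable borel" using assms(1) by measurable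
  ultimately show "integrable N (\<lambda>x. (f x)\<^sup>2)"
    by (intro integrable_const_bound[where B="B\<^sup>2"]) (auto simp: measN)
qed

lemma sqi_trig: "sqi (trig L)"
  using trig_bound[of L] by (auto intro: sqi_bounded)

lemma sq_lin_bound: "(a * f + b * g)\<^sup>2 \<le> 2 * a\<^sup>2 * f\<^sup>2 + 2 * b\<^sup>2 * (g::real)\<^sup>2"
proof -
  have "0 \<le> (a*f - b*g)\<^sup>2" by simp
  then show ?thesis by (simp add: power2_eq_square algebra_simps)
qed

lemma sqi_lin:
  assumes "sqi f" "sqi g"
  shows "sqi (\<lambda>x. a * f x + b * g x)"
  unfolding sqi_def
proof
  have [measurable]: "f \<in> borel_measurable borel" "g \<in> borel_measurable borel"
    using assms by (auto simp: sqi_def)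
  show m: "(\<lambda>x. a * f x + b * g x) \<in> borel_measurable borel" by measurable
  show "integrable N (\<lambda>x. (a * f x + b * g x)\<^sup>2)"
  proof (rule Bochner_Integration.integrable_bound)
    show "integrable N (\<lambda>x. 2 * a\<^sup>2 * (f x)\<^sup>2 + 2 * b\<^sup>2 * (g x)\<^sup>2)"
      using assms by (auto simp: sqi_def)
    have "(\<lambda>x. (a * f x + b * g x)\<^sup>2) \<in> borel_measurable borel" using m by measurable
    then show "(\<lambda>x. (a * f x + b * g x)\<^sup>2) \<in> borel_measurable N" by (simp add: measN)
    show "AE x in N. norm ((a * f x + b * g x)\<^sup>2) \<le> norm (2 * a\<^sup>2 * (f x)\<^sup>2 + 2 * b\<^sup>2 * (g x)\<^sup>2)"
    proof (rule AE_I2)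
      fix x show "norm ((a * f x + b * g x)\<^sup>2) \<le> norm (2 * a\<^sup>2 * (f x)\<^sup>2 + 2 * b\<^sup>2 * (g x)\<^sup>2)"
        using sq_lin_bound[of a "f x" b "g x"] by (simp add: abs_of_nonneg)
    qed
  qed
qed

lemma sqi_int_lin:
  assumes "sqi f" "sqi g"
  shows "(\<integral>x. (a * f x + b * g x)\<^sup>2 \<partial>N) \<le> 2 * a\<^sup>2 * (\<integral>x. (f x)\<^sup>2 \<partial>N) + 2 * b\<^sup>2 * (\<integral>x. (g x)\<^sup>2 \<partial>N)"
proof -
  have "(\<integral>x. (a * f x + b * g x)\<^sup>2 \<partial>N) \<le> (\<integral>x. 2 * a\<^sup>2 * (f x)\<^sup>2 + 2 * b\<^sup>2 * (g x)\<^sup>2 \<partial>N)"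
    using assms sqi_lin[OF assms, of a b] sq_lin_bound
    by (intro integral_mono) (auto simp: sqi_def)
  also have "\<dots> = 2 * a\<^sup>2 * (\<integral>x. (f x)\<^sup>2 \<partial>N) + 2 * b\<^sup>2 * (\<integral>x. (g x)\<^sup>2 \<partial>N)"
    using assms by (auto simp: sqi_def)
  finally show ?thesis .
qed

lemma sqi_diff_trig: "sqi f \<Longrightarrow> sqi (\<lambda>x. f x - trig L x)"
  using sqi_lin[of f "trig L" 1 "-1"] sqi_trig by simp

lemma apx_lin:
  assumes "sqi f" "sqi g" "apx f" "apx g"
  shows "apx (\<lambda>x. a * f x + b * g x)"
  unfolding apx_def
proof (intro allI impI)
  fix e :: real assume e: "e > 0"
  define e' where "e' = e / (4 * (a\<^sup>2 + b\<^sup>2 + 1))"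
  have e': "e' > 0" unfolding e'_def using e by (intro divide_pos_pos) (auto simp: add_nonneg_pos)
  obtain L1 where L1: "(\<integral>x. (f x - trig L1 x)\<^sup>2 \<partial>N) < e'" using assms(3) e' by (auto simp: apx_def)
  obtain L2 where L2: "(\<integral>x. (g x - trig L2 x)\<^sup>2 \<partial>N) < e'" using assms(4) e' by (auto simp: apx_def)
  let ?L = "lscale a L1 @ lscale b L2"
  have eq: "a * f x + b * g x - trig ?L x = a * (f x - trig L1 x) + b * (g x - trig L2 x)" for x
    by (simp add: trig_scale algebra_simps)
  have "(\<integral>x. (a * f x + b * g x - trig ?L x)\<^sup>2 \<partial>N)
      \<le> 2 * a\<^sup>2 * (\<integral>x. (f x - trig L1 x)\<^sup>2 \<partial>N) + 2 * b\<^sup>2 * (\<integral>x. (g x - trig L2 x)\<^sup>2 \<partial>N)"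
    unfolding eq using sqi_int_lin[OF sqi_diff_trig[OF assms(1)] sqi_diff_trig[OF assms(2)]] .
  also have "\<dots> \<le> 2 * a\<^sup>2 * e' + 2 * b\<^sup>2 * e'"
  proof (rule add_mono)
    show "2 * a\<^sup>2 * (\<integral>x. (f x - trig L1 x)\<^sup>2 \<partial>N) \<le> 2 * a\<^sup>2 * e'"
      using L1 by (intro mult_left_mono) auto
    show "2 * b\<^sup>2 * (\<integral>x. (g x - trig L2 x)\<^sup>2 \<partial>N) \<le> 2 * b\<^sup>2 * e'"
      using L2 by (intro mult_left_mono) auto
  qed
  also have "\<dots> < e"
  proof -
    have pos: "4 * (a\<^sup>2 + b\<^sup>2 + 1) > 0" by (simp add: add_nonneg_pos)
    have eq: "e = 4 * (a\<^sup>2 + b\<^sup>2 + 1) * e'" unfolding e'_def using pos by simp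
    have "0 < (2*a\<^sup>2+2*b\<^sup>2+4)*e'" using e' by (intro mult_pos_pos) (auto simp: add_nonneg_pos)
    then have "0 < 4 * (a\<^sup>2 + b\<^sup>2 + 1) * e' - (2 * a\<^sup>2 * e' + 2 * b\<^sup>2 * e')"
      by (simp add: algebra_simps)
    then show ?thesis using eq by linarith
  qed
  finally show "\<exists>L. (\<integral>x. (a * f x + b * g x - trig L x)\<^sup>2 \<partial>N) < e" by blast
qed

lemma apx_zero: "apx (\<lambda>x. 0)"
  unfolding apx_def by (intro allI impI exI[of _ "[]"]) simp

lemma apx_sum:
  assumes "finite S" "\<And>y. y \<in> S \<Longrightarrow> sqi (F y) \<and> apx (F y)"
  shows "sqi (\<lambda>x. \<Sum>y\<in>S. F y x) \<and> apx (\<lambda>x. \<Sum>y\<in>S. F y x)"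
  using assms
proof (induction S rule: finite_induct)
  case empty
  then show ?case using apx_zero sqi_bounded[of "\<lambda>x. 0" 0] by simp
next
  case (insert y S)
  then have a: "sqi (F y)" "apx (F y)" "sqi (\<lambda>x. \<Sum>y\<in>S. F y x)" "apx (\<lambda>x. \<Sum>y\<in>S. F y x)" by auto
  have e: "(\<lambda>x. \<Sum>y\<in>insert y S. F y x) = (\<lambda>x. 1 * F y x + 1 * (\<Sum>y\<in>S. F y x))"
    using insert(1,2) by simp
  show ?case unfolding e using sqi_lin[OF a(1,3), of 1 1] apx_lin[OF a(1,3,2,4), of 1 1] by blast
qed

end


context gdens
begin

lemma sqi_lin1: "sqi f \<Longrightarrow> sqi g \<Longrightarrow> sqi (\<lambda>x. f x - g x)"
  using sqi_lin[of f g 1 "-1"] by simp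

lemma int_split:
  assumes "sqi f" "sqi g" "sqi k"
  shows "(\<integral>x. (f x - g x)\<^sup>2 \<partial>N) \<le> 2 * (\<integral>x. (f x - k x)\<^sup>2 \<partial>N) + 2 * (\<integral>x. (k x - g x)\<^sup>2 \<partial>N)"
proof -
  have "(\<integral>x. (f x - g x)\<^sup>2 \<partial>N) = (\<integral>x. (1 * (f x - k x) + 1 * (k x - g x))\<^sup>2 \<partial>N)" by simp
  also have "\<dots> \<le> 2 * 1\<^sup>2 * (\<integral>x. (f x - k x)\<^sup>2 \<partial>N) + 2 * 1\<^sup>2 * (\<integral>x. (k x - g x)\<^sup>2 \<partial>N)"
    by (intro sqi_int_lin sqi_lin1 assms)
  finally show ?thesis by simp
qed

lemma tail_small:
  assumes "e > 0"
  shows "\<exists>R>0. measure N {x. R < \<bar>x\<bar>} < e"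
proof -
  define A where "A n = {x::real. real n < \<bar>x\<bar>}" for n
  have dec: "decseq A" unfolding A_def decseq_def by auto
  have "A n \<in> sets N" for n
    unfolding sN A_def by measurable
  then have "(\<lambda>n. measure N (A n)) \<longlonglongrightarrow> measure N (\<Inter>i. A i)"
    using dec by (intro finite_Lim_measure_decseq) auto
  moreover have "(\<Inter>i. A i) = {}"
  proof -
    have "x \<notin> (\<Inter>i. A i)" for x
    proof -
      obtain n where "\<bar>x\<bar> < real n" using reals_Archimedean2 by blast
      then have "x \<notin> A n" unfolding A_def by simp
      then show ?thesis by blast
    qed
    then show ?thesis by blast
  qed
  ultimately have "(\<lambda>n. measure N (A n)) \<longlonglongrightarrow> 0" by simp
  then obtain n where n: "measure N (A n) < e" using assms
    by (metis (no_types, lifting) LIMSEQ_D abs_of_nonneg le_refl measure_nonneg real_norm_def diff_zero)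
  have "measure N {x. real n + 1 < \<bar>x\<bar>} \<le> measure N (A n)"
    using \<open>\<And>n. A n \<in> sets N\<close> unfolding A_def by (intro finite_measure_mono) auto
  then show ?thesis using n by (intro exI[of _ "real n + 1"]) auto
qed

lemma apx_cont:
  assumes g: "continuous_on UNIV g" and B: "\<And>x. \<bar>g x\<bar> \<le> B"
  shows "apx g"
  unfolding apx_def
proof (intro allI impI)
  fix e :: real assume e: "e > 0"
  have B0: "B \<ge> 0" using B[of 0] by simp
  define \<delta> where "\<delta> = min 1 (sqrt (e/4))"
  have d0: "\<delta> > 0" "\<delta> \<le> 1" unfolding \<delta>_def using e by auto
  have d2: "\<delta>\<^sup>2 \<le> e/4"
  proof -
    have "\<delta> \<le> sqrt (e/4)" unfolding \<delta>_def by simp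
    then have "\<delta>\<^sup>2 \<le> (sqrt (e/4))\<^sup>2" using d0 by (intro power_mono) auto
    then show ?thesis using e by simp
  qed
  define C where "C = (2*B+1)\<^sup>2"
  have C0: "C > 0" unfolding C_def using B0 by simp
  obtain R where R: "R > 0" "measure N {x. R < \<bar>x\<bar>} < e / (4*C)"
    using tail_small[of "e/(4*C)"] e C0 by auto
  define \<psi> where "\<psi> u = g (2*R/pi * arcsin u)" for u
  have "continuous_on {-1..1} \<psi>"
    unfolding \<psi>_def
    by (intro continuous_on_compose2[OF g] continuous_on_mult continuous_on_const continuous_on_arcsin') auto
  then obtain p where p: "polynomial_function p" "\<forall>u\<in>{-1..1}. norm (\<psi> u - p u) < \<delta>"
    using Stone_Weierstrass_polynomial_function[of "{-1..1::real}" \<psi> \<delta>] d0 by auto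
  obtain L where L: "\<And>x. p (sin (pi/(2*R) * x)) = trig L x"
    using poly_sin_trig[of p "pi/(2*R)"] p(1) real_polynomial_function_eq by blast
  define S where "S = {x::real. R < \<bar>x\<bar>}"
  have Ssets: "S \<in> sets N" unfolding sN S_def by measurable
  have pt: "(g x - trig L x)\<^sup>2 \<le> \<delta>\<^sup>2 + C * indicator S x" for x
  proof -
    define u where "u = sin (pi/(2*R) * x)"
    have u: "u \<in> {-1..1}" unfolding u_def by auto
    have pu: "\<bar>\<psi> u - p u\<bar> < \<delta>" using p(2) u by auto
    have "\<bar>\<psi> u\<bar> \<le> B" unfolding \<psi>_def by (rule B)
    then have pB: "\<bar>p u\<bar> \<le> B + 1" using pu d0 by linarith
    show ?thesis
    proof (cases "\<bar>x\<bar> \<le> R")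
      case True
      have xr: "-1 \<le> x/R" "x/R \<le> 1" using True R(1) by (auto simp: field_simps abs_le_iff)
      have eqx: "pi/(2*R) * x = (pi/2) * (x/R)" by simp
      have "(pi/2) * (-1) \<le> (pi/2) * (x/R)" "(pi/2) * (x/R) \<le> (pi/2) * 1"
        using xr pi_gt_zero by (intro mult_left_mono; simp)+
      then have "- (pi/2) \<le> pi/(2*R) * x" "pi/(2*R) * x \<le> pi/2" unfolding eqx by simp_all
      then have "arcsin u = pi/(2*R) * x" unfolding u_def by (rule arcsin_sin)
      then have "\<psi> u = g x" unfolding \<psi>_def using R(1) by simp
      then have "\<bar>g x - trig L x\<bar> < \<delta>" using pu L[of x] unfolding u_def by simp
      then have "(g x - trig L x)\<^sup>2 \<le> \<delta>\<^sup>2"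
        by (metis abs_ge_zero abs_le_square_iff abs_of_nonneg d0(1) less_imp_le less_le_trans)
      moreover have "0 \<le> C * indicator S x" using C0 by simp
      ultimately show ?thesis by linarith
    next
      case False
      then have "indicator S x = (1::real)" unfolding S_def by simp
      moreover have "\<bar>g x - trig L x\<bar> \<le> 2*B+1"
        using B[of x] pB L[of x] unfolding u_def by linarith
      then have "(g x - trig L x)\<^sup>2 \<le> C" unfolding C_def
        by (metis abs_le_square_iff abs_of_nonneg B0 add_nonneg_nonneg zero_le_one mult_nonneg_nonneg zero_le_numeral)
      ultimately show ?thesis by (simp add: add_increasing)
    qed
  qed
  have gm: "g \<in> borel_measurable borel" using g by (rule borel_measurable_continuous_onI)
  have sg: "sqi g" by (rule sqi_bounded[OF gm B])
  have iS: "integrable N (indicator S :: real \<Rightarrow> real)"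
    using Ssets by (intro integrable_const_bound[where B=1]) (auto simp: indicator_def)
  have "(\<integral>x. (g x - trig L x)\<^sup>2 \<partial>N) \<le> (\<integral>x. \<delta>\<^sup>2 + C * indicator S x \<partial>N)"
  proof (rule integral_mono)
    show "integrable N (\<lambda>x. (g x - trig L x)\<^sup>2)" using sqi_diff_trig[OF sg] unfolding sqi_def by (rule conjunct2)
    show "integrable N (\<lambda>x. \<delta>\<^sup>2 + C * indicator S x)"
      using iS by (intro Bochner_Integration.integrable_add integrable_mult_right) auto
    show "\<And>x. x \<in> space N \<Longrightarrow> (g x - trig L x)\<^sup>2 \<le> \<delta>\<^sup>2 + C * indicator S x" using pt by auto
  qed
  also have "\<dots> = \<delta>\<^sup>2 + C * measure N S"
    using Ssets iS by (subst Bochner_Integration.integral_add) (auto simp: prob_space[unfolded spN])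
  also have "\<dots> < e/4 + C * (e/(4*C))"
    using d2 R(2) C0 unfolding S_def by (intro add_le_less_mono mult_strict_left_mono) auto
  also have "\<dots> < e" using C0 e by simp
  finally show "\<exists>L. (\<integral>x. (g x - trig L x)\<^sup>2 \<partial>N) < e" by blast
qed

end


context gdens
begin

lemma apx_ind:
  assumes A: "A \<in> sets borel"
  shows "apx (indicator A)"
  unfolding apx_def
proof (intro allI impI)
  fix e :: real assume e: "e > 0"
  define \<eta> where "\<eta> = e/4"
  have eta: "\<eta> > 0" unfolding \<eta>_def using e by simp
  have fin: "emeasure N (space N) \<noteq> \<infinity>" by simp
  have AN: "A \<in> sets N" using A sN by simp
  have emA: "emeasure N A = ennreal (measure N A)" by (simp add: emeasure_eq_measure)
  obtain K where K: "compact K" "K \<subseteq> A" "measure N A - \<eta>/2 < measure N K"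
  proof (cases "measure N A < \<eta>/2")
    case True
    then show ?thesis using that[of "{}"] by auto
  next
    case False
    have "ennreal (measure N A - \<eta>/2) < emeasure N A"
      unfolding emA using False eta by (subst ennreal_less_iff) auto
    also have "\<dots> = (SUP K \<in> {K. K \<subseteq> A \<and> compact K}. emeasure N K)"
      by (rule inner_regular[OF sN fin A])
    finally obtain K where "K \<subseteq> A" "compact K" "ennreal (measure N A - \<eta>/2) < emeasure N K"
      by (auto simp: less_SUP_iff)
    then show ?thesis using that[of K] False
      by (auto simp: emeasure_eq_measure ennreal_less_iff)
  qed
  have "emeasure N A < ennreal (measure N A + \<eta>/2)"
    unfolding emA using eta by (subst ennreal_less_iff) auto
  also have "emeasure N A = (INF U \<in> {U. A \<subseteq> U \<and> open U}. emeasure N U)"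
    by (rule outer_regular[OF sN fin A])
  finally obtain U where U: "A \<subseteq> U" "open U" "emeasure N U < ennreal (measure N A + \<eta>/2)"
    by (auto simp: INF_less_iff)
  have U2: "measure N U < measure N A + \<eta>/2"
    using U(3) by (simp add: emeasure_eq_measure ennreal_less_iff)
  have KU: "K \<subseteq> U" using K U by auto
  have UN: "U \<in> sets N" "K \<in> sets N" using U(2) K(1) sN by (auto intro: borel_open borel_closed compact_imp_closed)
  obtain f :: "real \<Rightarrow> real" where f: "continuous_on UNIV f" "\<And>x. f x \<in> closed_segment 1 0"
    "\<And>x. x \<in> K \<Longrightarrow> f x = 1" "\<And>x. x \<in> -U \<Longrightarrow> f x = 0"
    using Urysohn[of K "-U" 1 0] K(1) U(2) KU by (auto intro: compact_imp_closed)
  have f01: "0 \<le> f x \<and> f x \<le> 1" for x using f(2)[of x] by (simp add: closed_segment_eq_real_ivl)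
  have fb: "\<bar>f x\<bar> \<le> 1" for x using f01[of x] by simp
  have fm: "f \<in> borel_measurable borel" using f(1) by (rule borel_measurable_continuous_onI)
  have im: "indicator A \<in> borel_measurable borel" using A by simp
  have sA: "sqi (indicator A)" by (rule sqi_bounded[OF im, of 1]) (simp add: indicator_def)
  have sf: "sqi f" by (rule sqi_bounded[OF fm fb])
  have pt: "(indicator A x - f x)\<^sup>2 \<le> indicator (U - K) x" for x
  proof (cases "x \<in> K")
    case True then show ?thesis using K(2) f(3) by (auto simp: indicator_def)
  next
    case nK: False
    show ?thesis
    proof (cases "x \<in> U")
      case True
      have "\<bar>indicator A x - f x\<bar> \<le> 1"
        using f01[of x] by (cases "x \<in> A") (simp_all add: indicator_def)
      then have "(indicator A x - f x)\<^sup>2 \<le> 1"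
        using abs_le_square_iff[of "indicator A x - f x" 1] by simp
      then show ?thesis using True nK by (simp add: indicator_def)
    next
      case False then show ?thesis using U(1) f(4)[of x] by (auto simp: indicator_def)
    qed
  qed
  have iUK: "integrable N (indicator (U - K) :: real \<Rightarrow> real)"
    using UN by (intro integrable_const_bound[where B=1]) (auto simp: indicator_def)
  have "(\<integral>x. (indicator A x - f x)\<^sup>2 \<partial>N) \<le> (\<integral>x. indicator (U - K) x \<partial>N)"
    using sqi_lin1[OF sA sf] iUK pt by (intro integral_mono) (auto simp: sqi_def)
  also have "\<dots> = measure N U - measure N K"
    using UN KU by (simp add: finite_measure_Diff)
  also have "\<dots> < \<eta>" using K(3) U2 by simp
  finally have e1: "(\<integral>x. (indicator A x - f x)\<^sup>2 \<partial>N) < \<eta>" .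
  obtain L where e2: "(\<integral>x. (f x - trig L x)\<^sup>2 \<partial>N) < \<eta>"
    using apx_cont[OF f(1) fb] eta unfolding apx_def by blast
  have "(\<integral>x. (indicator A x - trig L x)\<^sup>2 \<partial>N)
     \<le> 2 * (\<integral>x. (indicator A x - f x)\<^sup>2 \<partial>N) + 2 * (\<integral>x. (f x - trig L x)\<^sup>2 \<partial>N)"
    by (rule int_split[OF sA sqi_trig sf])
  also have "\<dots> < e" using e1 e2 unfolding \<eta>_def by simp
  finally show "\<exists>L. (\<integral>x. (indicator A x - trig L x)\<^sup>2 \<partial>N) < e" by blast
qed

lemma apx_scale:
  assumes "sqi f" "apx f"
  shows "sqi (\<lambda>x. c * f x) \<and> apx (\<lambda>x. c * f x)"
proof -
  have z: "sqi (\<lambda>x. 0)" by (rule sqi_bounded[of _ 0]) auto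
  show ?thesis using sqi_lin[OF assms(1) z, of c 0] apx_lin[OF assms(1) z assms(2) apx_zero, of c 0] by simp
qed

lemma apx_simple:
  assumes "simple_function borel F"
  shows "sqi F \<and> apx F"
proof -
  have rep: "F x = (\<Sum>y\<in>F ` UNIV. y * indicator (F -` {y}) x)" for x
  proof -
    have "F x = (\<Sum>y\<in>F ` space borel. indicator (F -` {y} \<inter> space borel) x *\<^sub>R y)"
      by (rule simple_function_indicator_representation_banach[OF assms]) simp
    also have "\<dots> = (\<Sum>y\<in>F ` UNIV. y * indicator (F -` {y}) x)"
      unfolding space_borel by (intro sum.cong refl) simp
    finally show ?thesis .
  qed
  then have rep': "F = (\<lambda>x. \<Sum>y\<in>F ` UNIV. y * indicator (F -` {y}) x)" by (rule ext)
  have fin: "finite (F ` UNIV)" using simple_functionD(1)[OF assms] unfolding space_borel .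
  have sets: "F -` {y} \<in> sets borel" for y
    using simple_functionD(2)[OF assms, of "{y}"] unfolding space_borel by simp
  have each: "sqi (\<lambda>x. y * indicator (F -` {y}) x) \<and> apx (\<lambda>x. y * indicator (F -` {y}) x)" for y
  proof (rule apx_scale)
    show "sqi (indicator (F -` {y}))"
    proof -
      have im: "(indicator (F -` {y}) :: real \<Rightarrow> real) \<in> borel_measurable borel"
        using sets by (rule borel_measurable_indicator)
      show ?thesis by (rule sqi_bounded[where B=1, OF im]) (simp add: indicator_def)
    qed
    show "apx (indicator (F -` {y}))" by (rule apx_ind[OF sets])
  qed
  have "sqi (\<lambda>x. \<Sum>y\<in>F ` UNIV. y * indicator (F -` {y}) x) \<and> apx (\<lambda>x. \<Sum>y\<in>F ` UNIV. y * indicator (F -` {y}) x)"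
    by (rule apx_sum[OF fin each])
  then show ?thesis unfolding rep'[symmetric] .
qed

lemma apx_all:
  assumes h: "sqi h"
  shows "apx h"
  unfolding apx_def
proof (intro allI impI)
  fix e :: real assume e: "e > 0"
  have hm[measurable]: "h \<in> borel_measurable borel" using h by (simp add: sqi_def)
  obtain F where F: "\<And>i. simple_function borel (F i)" "\<And>x. (\<lambda>i. F i x) \<longlonglongrightarrow> h x"
    "\<And>i x. dist (F i x) 0 \<le> 2 * dist (h x) 0"
    using borel_measurable_implies_sequence_metric[OF hm, of 0] by auto
  have sF: "sqi (F i) \<and> apx (F i)" for i by (rule apx_simple[OF F(1)])
  have Fm[measurable]: "F i \<in> borel_measurable borel" for i using sF[of i] by (simp add: sqi_def)
  have "(\<lambda>i. \<integral>x. (h x - F i x)\<^sup>2 \<partial>N) \<longlonglongrightarrow> (\<integral>x. 0 \<partial>N)"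
  proof (rule integral_dominated_convergence[where w="\<lambda>x. 9 * (h x)\<^sup>2"])
    show "(\<lambda>x. 0::real) \<in> borel_measurable N" by simp
    show "(\<lambda>x. (h x - F i x)\<^sup>2) \<in> borel_measurable N" for i
      unfolding measN by measurable
    show "integrable N (\<lambda>x. 9 * (h x)\<^sup>2)" using h by (simp add: sqi_def)
    show "AE x in N. (\<lambda>i. (h x - F i x)\<^sup>2) \<longlonglongrightarrow> 0"
    proof (rule AE_I2)
      fix x
      have "(\<lambda>i. (h x - F i x)\<^sup>2) \<longlonglongrightarrow> (h x - h x)\<^sup>2"
        by (intro tendsto_intros F(2))
      then show "(\<lambda>i. (h x - F i x)\<^sup>2) \<longlonglongrightarrow> 0" by simp
    qed
    show "AE x in N. norm ((h x - F i x)\<^sup>2) \<le> 9 * (h x)\<^sup>2" for i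
    proof (rule AE_I2)
      fix x
      have "\<bar>F i x\<bar> \<le> 2 * \<bar>h x\<bar>" using F(3)[of i x] by (simp add: dist_real_def)
      then have "\<bar>h x - F i x\<bar> \<le> \<bar>3 * h x\<bar>" by (simp add: abs_mult)
      then have "(h x - F i x)\<^sup>2 \<le> (3 * h x)\<^sup>2" by (simp add: abs_le_square_iff)
      then show "norm ((h x - F i x)\<^sup>2) \<le> 9 * (h x)\<^sup>2" by (simp add: power_mult_distrib)
    qed
  qed
  then have "(\<lambda>i. \<integral>x. (h x - F i x)\<^sup>2 \<partial>N) \<longlonglongrightarrow> 0" unfolding integral_zero .
  from LIMSEQ_D[OF this, of "e/4"] e obtain no where
    "\<forall>n\<ge>no. norm ((\<integral>x. (h x - F n x)\<^sup>2 \<partial>N) - 0) < e/4" by auto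
  then obtain i where i: "\<bar>(\<integral>x. (h x - F i x)\<^sup>2 \<partial>N) - 0\<bar> < e/4" by auto
  obtain L where L: "(\<integral>x. (F i x - trig L x)\<^sup>2 \<partial>N) < e/4"
  proof -
    have "apx (F i)" using sF[of i] by simp
    from this[unfolded apx_def, rule_format, of "e/4"] e show ?thesis using that by auto
  qed
  have "(\<integral>x. (h x - trig L x)\<^sup>2 \<partial>N)
     \<le> 2 * (\<integral>x. (h x - F i x)\<^sup>2 \<partial>N) + 2 * (\<integral>x. (F i x - trig L x)\<^sup>2 \<partial>N)"
    using sF[of i] by (intro int_split[OF h sqi_trig]) auto
  also have "\<dots> < e" using i L by simp
  finally show "\<exists>L. (\<integral>x. (h x - trig L x)\<^sup>2 \<partial>N) < e" by blast
qed

end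


lemma std_char:
  shows "(\<integral>w. cos (a*w) \<partial>std_normal_distribution) = exp (-(a\<^sup>2)/2)"
    and "(\<integral>w. sin (a*w) \<partial>std_normal_distribution) = 0"
proof -
  interpret R: real_distribution std_normal_distribution by (rule real_dist_normal_dist)
  have int: "integrable std_normal_distribution (\<lambda>w. iexp (a*w))"
    by (intro R.integrable_iexp) auto
  have c: "char std_normal_distribution a = complex_of_real (exp (-(a\<^sup>2)/2))"
    by (simp add: char_std_normal_distribution)
  have "(\<integral>w. cos (a*w) \<partial>std_normal_distribution) = (\<integral>w. Re (iexp (a*w)) \<partial>std_normal_distribution)"
    by (intro Bochner_Integration.integral_cong refl) (simp add: Re_exp)
  also have "\<dots> = Re (char std_normal_distribution a)"
    unfolding char_def using int by simp
  finally show "(\<integral>w. cos (a*w) \<partial>std_normal_distribution) = exp (-(a\<^sup>2)/2)" using c by simp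
  have "(\<integral>w. sin (a*w) \<partial>std_normal_distribution) = (\<integral>w. Im (iexp (a*w)) \<partial>std_normal_distribution)"
    by (intro Bochner_Integration.integral_cong refl) (simp add: Im_exp)
  also have "\<dots> = Im (char std_normal_distribution a)"
    unfolding char_def using int by simp
  finally show "(\<integral>w. sin (a*w) \<partial>std_normal_distribution) = 0" using c by simp
qed

locale gvec = prob_space M for M :: "(real^'d::finite) measure" +
  assumes sM: "sets M = sets borel"
    and coord: "\<And>i. distributed M lborel (\<lambda>x. x$i) std_normal_density"
    and jg: "\<And>i j. jointly_gaussian M (\<lambda>x. x$i) (\<lambda>x. x$j)"
begin

lemma spM[simp]: "space M = UNIV"
  using sets_eq_imp_space_eq[OF sM] by simp

lemma measM: "f \<in> borel_measurable M \<longleftrightarrow> f \<in> borel_measurable borel"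
  by (simp add: measurable_cong_sets[OF sM refl])

lemma nth_meas[measurable]: "(\<lambda>x. x$i) \<in> borel_measurable M"
  unfolding measM by simp

lemma distr_coord: "distr M borel (\<lambda>x. x$i) = std_normal_distribution"
proof -
  have "distr M borel (\<lambda>x. x$i) = distr M lborel (\<lambda>x. x$i)"
    by (rule distr_cong) auto
  also have "\<dots> = std_normal_distribution"
    by (rule distributed_distr_eq_density[OF coord])
  finally show ?thesis .
qed

lemma int_coord:
  fixes g :: "real \<Rightarrow> real"
  assumes "g \<in> borel_measurable borel"
  shows "(\<integral>x. g (x$i) \<partial>M) = (\<integral>x. g x \<partial>std_normal_distribution)"
  using integral_distr[OF nth_meas assms, of i] distr_coord[of i] by simp

lemma intb_coord:
  fixes g :: "real \<Rightarrow> real"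
  assumes "g \<in> borel_measurable borel"
  shows "integrable M (\<lambda>x. g (x$i)) \<longleftrightarrow> integrable std_normal_distribution g"
  using integrable_distr_eq[OF nth_meas assms, of i] distr_coord[of i] by simp

lemma Ex: "(\<integral>x. x$i \<partial>M) = 0"
  using int_coord[of "\<lambda>x. x" i] integral_std_normal_distribution_moment_odd[of 1] by simp

lemma Ex2: "(\<integral>x. (x$i)\<^sup>2 \<partial>M) = 1"
  using int_coord[of "\<lambda>x. x^2" i] std_normal_distribution_even_moments(1)[of 1] by simp

lemma int_x: "integrable M (\<lambda>x. x$i)"
  using intb_coord[of "\<lambda>x. x" i] integrable_std_normal_distribution_moment[of 1] by simp

lemma int_x2: "integrable M (\<lambda>x. (x$i)\<^sup>2)"
  using intb_coord[of "\<lambda>x. x^2" i] integrable_std_normal_distribution_moment[of 2] by simp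

lemma int_xx: "integrable M (\<lambda>x. x$i * x$j)"
proof (rule Bochner_Integration.integrable_bound)
  show "integrable M (\<lambda>x. (x$i)\<^sup>2 + (x$j)\<^sup>2)" using int_x2 by simp
  show "(\<lambda>x. x$i * x$j) \<in> borel_measurable M" by measurable
  show "AE x in M. norm (x$i * x$j) \<le> norm ((x$i)\<^sup>2 + (x$j)\<^sup>2)"
  proof (rule AE_I2)
    fix x :: "real^'d"
    have "0 \<le> (\<bar>x$i\<bar> - \<bar>x$j\<bar>)\<^sup>2" by simp
    then have "\<bar>x$i\<bar> * \<bar>x$j\<bar> \<le> (x$i)\<^sup>2 + (x$j)\<^sup>2"
      by (simp add: power2_eq_square algebra_simps) (smt (verit) abs_ge_zero mult_nonneg_nonneg)
    then show "norm (x$i * x$j) \<le> norm ((x$i)\<^sup>2 + (x$j)\<^sup>2)" by (simp add: abs_mult)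
  qed
qed

abbreviation rh where "rh i j \<equiv> second_moment M i j"

lemma EZ: "(\<integral>x. s * x$i + t * x$j \<partial>M) = 0"
  using int_x[of i] int_x[of j] Ex[of i] Ex[of j] by simp

lemma EZ2: "(\<integral>x. (s * x$i + t * x$j)\<^sup>2 \<partial>M) = s\<^sup>2 + t\<^sup>2 + 2 * s * t * rh i j"
proof -
  have "(\<lambda>x. (s * x$i + t * x$j)\<^sup>2) = (\<lambda>x. s\<^sup>2 * (x$i)\<^sup>2 + t\<^sup>2 * (x$j)\<^sup>2 + (2 * s * t) * (x$i * x$j))"
    by (simp add: power2_eq_square algebra_simps)
  then show ?thesis
    using int_x2[of i] int_x2[of j] int_xx[of i j] Ex2[of i] Ex2[of j]
    by (simp add: second_moment_def)
qed

lemma cos_sin_Z: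
  shows "(\<integral>x. cos (s * x$i + t * x$j) \<partial>M) = exp (-(s\<^sup>2 + t\<^sup>2 + 2 * s * t * rh i j)/2)"
    and "(\<integral>x. sin (s * x$i + t * x$j) \<partial>M) = 0"
proof -
  define Z where "Z x = s * x$i + t * x$j" for x
  have Zm[measurable]: "Z \<in> borel_measurable M" unfolding Z_def by measurable
  have g: "gaussian_rv M Z" using jg[of i j] unfolding jointly_gaussian_def Z_def by blast
  have EZ': "(\<integral>x. Z x \<partial>M) = 0" unfolding Z_def by (rule EZ)
  have EZ2': "(\<integral>x. (Z x)\<^sup>2 \<partial>M) = s\<^sup>2 + t\<^sup>2 + 2 * s * t * rh i j" unfolding Z_def by (rule EZ2)
  define V where "V = s\<^sup>2 + t\<^sup>2 + 2 * s * t * rh i j"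
  have "(\<integral>x. cos (Z x) \<partial>M) = exp (-V/2) \<and> (\<integral>x. sin (Z x) \<partial>M) = 0"
  proof -
    obtain \<mu> \<sigma> where "(\<sigma> = 0 \<and> (AE x in M. Z x = \<mu>)) \<or> (\<sigma> > 0 \<and> distributed M lborel Z (normal_density \<mu> \<sigma>))"
      using g unfolding gaussian_rv_def by blast
    then show ?thesis
    proof
      assume a: "\<sigma> = 0 \<and> (AE x in M. Z x = \<mu>)"
      then have ae: "AE x in M. Z x = \<mu>" by simp
      have "(\<integral>x. Z x \<partial>M) = (\<integral>x. \<mu> \<partial>M)" by (rule integral_cong_AE) (use ae in auto)
      then have m0: "\<mu> = 0" using EZ' by (simp add: prob_space[unfolded spM])
      have "(\<integral>x. (Z x)\<^sup>2 \<partial>M) = (\<integral>x. \<mu>\<^sup>2 \<partial>M)" by (rule integral_cong_AE) (use ae in auto)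
      then have "V = 0" using EZ2' m0 unfolding V_def by (simp add: prob_space[unfolded spM])
      moreover have "(\<integral>x. cos (Z x) \<partial>M) = (\<integral>x. cos \<mu> \<partial>M)" by (rule integral_cong_AE) (use ae in auto)
      moreover have "(\<integral>x. sin (Z x) \<partial>M) = (\<integral>x. sin \<mu> \<partial>M)" by (rule integral_cong_AE) (use ae in auto)
      ultimately show ?thesis using m0 by (simp add: prob_space[unfolded spM])
    next
      assume a: "\<sigma> > 0 \<and> distributed M lborel Z (normal_density \<mu> \<sigma>)"
      then have s0: "\<sigma> > 0" and D: "distributed M lborel Z (normal_density \<mu> \<sigma>)" by auto
      have "expectation Z = \<mu>" by (rule normal_distributed_expectation[OF s0 D])
      then have m0: "\<mu> = 0" using EZ' by simp
      have "variance Z = \<sigma>\<^sup>2" by (rule normal_distributed_variance[OF s0 D])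
      then have vs: "V = \<sigma>\<^sup>2" using EZ' EZ2' unfolding V_def by simp
      have DW: "distributed M lborel (\<lambda>x. 0 + (1/\<sigma>) * Z x) (normal_density (0 + (1/\<sigma>) * \<mu>) (\<bar>1/\<sigma>\<bar> * \<sigma>))"
        using s0 by (intro normal_density_affine[OF D]) auto
      then have DW': "distributed M lborel (\<lambda>x. Z x / \<sigma>) std_normal_density"
        using s0 m0 by simp
      have Wm: "(\<lambda>x. Z x / \<sigma>) \<in> measurable M borel" using Zm by measurable
      have dW: "distr M borel (\<lambda>x. Z x / \<sigma>) = std_normal_distribution"
      proof -
        have "distr M borel (\<lambda>x. Z x / \<sigma>) = distr M lborel (\<lambda>x. Z x / \<sigma>)"
          by (rule distr_cong) auto
        also have "\<dots> = std_normal_distribution"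
          by (rule distributed_distr_eq_density[OF DW'])
        finally show ?thesis .
      qed
      have "(\<integral>x. cos (Z x) \<partial>M) = (\<integral>x. cos (\<sigma> * (Z x / \<sigma>)) \<partial>M)" using s0 by simp
      also have "\<dots> = (\<integral>w. cos (\<sigma> * w) \<partial>distr M borel (\<lambda>x. Z x / \<sigma>))"
        by (rule integral_distr[symmetric, OF Wm]) simp
      also have "\<dots> = exp (-(\<sigma>\<^sup>2)/2)" unfolding dW by (rule std_char(1))
      finally have c: "(\<integral>x. cos (Z x) \<partial>M) = exp (-V/2)" using vs by simp
      have "(\<integral>x. sin (Z x) \<partial>M) = (\<integral>x. sin (\<sigma> * (Z x / \<sigma>)) \<partial>M)" using s0 by simp
      also have "\<dots> = (\<integral>w. sin (\<sigma> * w) \<partial>distr M borel (\<lambda>x. Z x / \<sigma>))"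
        by (rule integral_distr[symmetric, OF Wm]) simp
      also have "\<dots> = 0" unfolding dW by (rule std_char(2))
      finally show ?thesis using c by simp
    qed
  qed
  then show "(\<integral>x. cos (s * x$i + t * x$j) \<partial>M) = exp (-(s\<^sup>2 + t\<^sup>2 + 2 * s * t * rh i j)/2)"
    and "(\<integral>x. sin (s * x$i + t * x$j) \<partial>M) = 0"
    unfolding Z_def V_def by auto
qed

end


definition cf :: "nat \<Rightarrow> real \<times> real \<times> real \<Rightarrow> real" where
  "cf n p = (if even n then fst p else fst (snd p)) * exp (-(snd (snd p))\<^sup>2/2) * (snd (snd p))^n"

definition beta :: "nat \<Rightarrow> (real \<times> real \<times> real) list \<Rightarrow> real" where
  "beta n L = (\<Sum>p\<leftarrow>L. cf n p)"

lemma pair_series: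
  "(\<lambda>n. r^n * cf n (a,b,s) * cf n (c,d,t) / fact n) sums
     (exp (-(s\<^sup>2+t\<^sup>2)/2) * (a* c* cosh (r* s* t) + b* d* sinh (r* s* t)))"
proof -
  define x where "x = r* s* t"
  define e0 where "e0 = exp (-(s\<^sup>2+t\<^sup>2)/2)"
  have c: "(\<lambda>n. if even n then x ^ n / fact n else 0) sums cosh x"
  proof -
    have "(\<lambda>n. if even n then x ^ n /\<^sub>R fact n else 0) = (\<lambda>n. if even n then x ^ n / fact n else 0)"
      by (rule ext) (simp add: field_simps)
    then show ?thesis using cosh_converges[of x] by simp
  qed
  have sn: "(\<lambda>n. if even n then 0 else x ^ n / fact n) sums sinh x"
  proof -
    have "(\<lambda>n. if even n then 0 else x ^ n /\<^sub>R fact n) = (\<lambda>n. if even n then 0 else x ^ n / fact n)"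
      by (rule ext) (simp add: field_simps)
    then show ?thesis using sinh_converges[of x] by simp
  qed
  have "(\<lambda>n. e0 * (a* c * (if even n then x ^ n / fact n else 0) + b* d * (if even n then 0 else x ^ n / fact n)))
      sums (e0 * (a* c* cosh x + b* d* sinh x))"
    by (intro sums_mult sums_add c sn)
  moreover have "r^n * cf n (a,b,s) * cf n (c,d,t) / fact n
      = e0 * (a* c * (if even n then x ^ n / fact n else 0) + b* d * (if even n then 0 else x ^ n / fact n))" for n
  proof -
    have ee: "exp (-(s\<^sup>2)/2) * exp (-(t\<^sup>2)/2) = e0" unfolding e0_def by (simp add: exp_add[symmetric] field_simps)
    have xx: "r^n * s^n * t^n = x^n" unfolding x_def by (simp add: power_mult_distrib)
    show ?thesis
      by (cases "even n") (simp_all add: cf_def ee[symmetric] xx[symmetric] field_simps)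
  qed
  ultimately show ?thesis unfolding x_def e0_def by simp
qed

lemma sums_bilinear:
  assumes "\<And>p q. (\<lambda>n. r n * cf n p * cf n q) sums V p q"
  shows "(\<lambda>n. r n * beta n L1 * beta n L2) sums (\<Sum>p\<leftarrow>L1. \<Sum>q\<leftarrow>L2. V p q)"
proof -
  have one: "(\<lambda>n. r n * cf n p * beta n L2) sums (\<Sum>q\<leftarrow>L2. V p q)" for p
  proof (induction L2)
    case Nil then show ?case by (simp add: beta_def)
  next
    case (Cons q L2)
    have "(\<lambda>n. r n * cf n p * cf n q + r n * cf n p * beta n L2) sums (V p q + (\<Sum>q\<leftarrow>L2. V p q))"
      by (intro sums_add assms Cons)
    then show ?case by (simp add: beta_def distrib_left)
  qed
  show ?thesis
  proof (induction L1)
    case Nil then show ?case by (simp add: beta_def)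
  next
    case (Cons p L1)
    have "(\<lambda>n. r n * cf n p * beta n L2 + r n * beta n L1 * beta n L2) sums ((\<Sum>q\<leftarrow>L2. V p q) + (\<Sum>p\<leftarrow>L1. \<Sum>q\<leftarrow>L2. V p q))"
      by (intro sums_add one Cons)
    then show ?case by (simp add: beta_def distrib_left distrib_right)
  qed
qed

context gvec
begin

lemma trm_meas[measurable]: "(\<lambda>x. trm p (x$i)) \<in> borel_measurable M"
  unfolding trm_def by measurable

lemma trig_meas'[measurable]: "(\<lambda>x. trig L (x$i)) \<in> borel_measurable M"
  using measurable_compose[OF nth_meas trig_meas] by (simp add: comp_def)

lemma int_bounded:
  fixes f :: "real^'d \<Rightarrow> real"
  assumes "f \<in> borel_measurable M" "\<And>x. \<bar>f x\<bar> \<le> B"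
  shows "integrable M f"
  using assms by (intro integrable_const_bound[where B=B]) auto

lemma int_trig2: "integrable M (\<lambda>x. trig L1 (x$i) * trig L2 (x$j))"
proof -
  obtain B1 where B1: "\<And>x. \<bar>trig L1 x\<bar> \<le> B1" using trig_bound by blast
  obtain B2 where B2: "\<And>x. \<bar>trig L2 x\<bar> \<le> B2" using trig_bound by blast
  have "\<bar>trig L1 (x$i) * trig L2 (x$j)\<bar> \<le> B1 * B2" for x
    unfolding abs_mult using B1 B2 by (intro mult_mono) (auto intro: order_trans[OF abs_ge_zero])
  then show ?thesis by (intro int_bounded) auto
qed

lemma int_cos: "integrable M (\<lambda>x. cos (u * x$i + v * x$j))"
  by (rule int_bounded[where B=1]) auto
lemma int_sin: "integrable M (\<lambda>x. sin (u * x$i + v * x$j))"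
  by (rule int_bounded[where B=1]) auto

lemma pair_expect:
  "(\<integral>x. trm (a,b,s) (x$i) * trm (c,d,t) (x$j) \<partial>M)
     = exp (-(s\<^sup>2+t\<^sup>2)/2) * (a* c* cosh (rh i j* s* t) + b* d* sinh (rh i j* s* t))"
proof -
  define C1 where "C1 x = cos (s * x$i + t * x$j)" for x
  define C2 where "C2 x = cos (s * x$i + (-t) * x$j)" for x
  define S1 where "S1 x = sin (s * x$i + t * x$j)" for x
  define S2 where "S2 x = sin (s * x$i + (-t) * x$j)" for x
  have eq: "trm (a,b,s) (x$i) * trm (c,d,t) (x$j) =
     ((a* c/2 - b* d/2) * C1 x + (a* c/2 + b* d/2) * C2 x) + ((a* d/2 + b* c/2) * S1 x + (b* c/2 - a* d/2) * S2 x)" for x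
    unfolding trm_def C1_def C2_def S1_def S2_def
    by (simp add: cos_add sin_add cos_diff sin_diff algebra_simps add_divide_distrib diff_divide_distrib)
  have iC1: "integrable M C1" unfolding C1_def by (rule int_cos)
  have iC2: "integrable M C2" unfolding C2_def by (rule int_cos)
  have iS1: "integrable M S1" unfolding S1_def by (rule int_sin)
  have iS2: "integrable M S2" unfolding S2_def by (rule int_sin)
  have vC1: "(\<integral>x. C1 x \<partial>M) = exp (-(s\<^sup>2+t\<^sup>2)/2) * exp (-(rh i j* s* t))"
    unfolding C1_def cos_sin_Z(1) by (simp add: exp_add[symmetric] field_simps)
  have vC2: "(\<integral>x. C2 x \<partial>M) = exp (-(s\<^sup>2+t\<^sup>2)/2) * exp (rh i j* s* t)"
    unfolding C2_def cos_sin_Z(1) by (simp add: exp_add[symmetric] field_simps)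
  have vS1: "(\<integral>x. S1 x \<partial>M) = 0" unfolding S1_def by (rule cos_sin_Z(2))
  have vS2: "(\<integral>x. S2 x \<partial>M) = 0" unfolding S2_def by (rule cos_sin_Z(2))
  have "(\<integral>x. trm (a,b,s) (x$i) * trm (c,d,t) (x$j) \<partial>M) =
     (a* c/2 - b* d/2) * (\<integral>x. C1 x \<partial>M) + (a* c/2 + b* d/2) * (\<integral>x. C2 x \<partial>M)
     + ((a* d/2 + b* c/2) * (\<integral>x. S1 x \<partial>M) + (b* c/2 - a* d/2) * (\<integral>x. S2 x \<partial>M))"
    unfolding eq using iC1 iC2 iS1 iS2 by simp
  also have "\<dots> = exp (-(s\<^sup>2+t\<^sup>2)/2) * (a* c* cosh (rh i j* s* t) + b* d* sinh (rh i j* s* t))"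
    unfolding vC1 vC2 vS1 vS2 cosh_def sinh_def by (simp add: field_simps exp_minus)
  finally show ?thesis .
qed

lemma int_trig_bilin:
  "(\<integral>x. trig L1 (x$i) * trig L2 (x$j) \<partial>M) = (\<Sum>p\<leftarrow>L1. \<Sum>q\<leftarrow>L2. \<integral>x. trm p (x$i) * trm q (x$j) \<partial>M)"
proof -
  have one: "(\<integral>x. trm p (x$i) * trig L2 (x$j) \<partial>M) = (\<Sum>q\<leftarrow>L2. \<integral>x. trm p (x$i) * trm q (x$j) \<partial>M)" for p
  proof (induction L2)
    case Nil then show ?case by simp
  next
    case (Cons q L2)
    have i1: "integrable M (\<lambda>x. trm p (x$i) * trm q (x$j))"
      using int_trig2[of "[p]" i "[q]" j] by simp
    have i2: "integrable M (\<lambda>x. trm p (x$i) * trig L2 (x$j))"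
      using int_trig2[of "[p]" i L2 j] by simp
    have "(\<integral>x. trm p (x$i) * trig (q#L2) (x$j) \<partial>M)
        = (\<integral>x. trm p (x$i) * trm q (x$j) + trm p (x$i) * trig L2 (x$j) \<partial>M)"
      by (simp add: distrib_left)
    also have "\<dots> = (\<integral>x. trm p (x$i) * trm q (x$j) \<partial>M) + (\<integral>x. trm p (x$i) * trig L2 (x$j) \<partial>M)"
      using i1 i2 by (rule Bochner_Integration.integral_add)
    finally show ?case using Cons by simp
  qed
  show ?thesis
  proof (induction L1)
    case Nil then show ?case by simp
  next
    case (Cons p L1)
    have i1: "integrable M (\<lambda>x. trm p (x$i) * trig L2 (x$j))"
      using int_trig2[of "[p]" i L2 j] by simp
    have i2: "integrable M (\<lambda>x. trig L1 (x$i) * trig L2 (x$j))" by (rule int_trig2)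
    have "(\<integral>x. trig (p#L1) (x$i) * trig L2 (x$j) \<partial>M)
        = (\<integral>x. trm p (x$i) * trig L2 (x$j) + trig L1 (x$i) * trig L2 (x$j) \<partial>M)"
      by (simp add: distrib_right)
    also have "\<dots> = (\<integral>x. trm p (x$i) * trig L2 (x$j) \<partial>M) + (\<integral>x. trig L1 (x$i) * trig L2 (x$j) \<partial>M)"
      using i1 i2 by (rule Bochner_Integration.integral_add)
    finally show ?case using Cons one by simp
  qed
qed

lemma prod_series:
  "(\<lambda>n. (rh i j)^n / fact n * beta n L1 * beta n L2) sums (\<integral>x. trig L1 (x$i) * trig L2 (x$j) \<partial>M)"
proof -
  have "(\<lambda>n. (rh i j)^n / fact n * cf n p * cf n q) sums (\<integral>x. trm p (x$i) * trm q (x$j) \<partial>M)" for p q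
  proof -
    obtain a b s where p: "p = (a,b,s)" by (cases p) auto
    obtain c d t where q: "q = (c,d,t)" by (cases q) auto
    show ?thesis using pair_series[of "rh i j" a b s c d t] unfolding p q pair_expect
      by (simp add: field_simps)
  qed
  from sums_bilinear[OF this, of L1 L2] show ?thesis unfolding int_trig_bilin .
qed

lemma H_series:
  fixes Ls :: "'d \<Rightarrow> (real \<times> real \<times> real) list"
  shows "(\<lambda>n. quad_form (hadamard_pow (second_moment M) n) (\<chi> i. beta n (Ls i)) / fact n)
          sums (\<integral>x. (\<Sum>i\<in>UNIV. trig (Ls i) (x$i))\<^sup>2 \<partial>M)"
proof -
  have sq: "(\<Sum>i\<in>UNIV. trig (Ls i) (x$i))\<^sup>2 = (\<Sum>i\<in>UNIV. \<Sum>j\<in>UNIV. trig (Ls i) (x$i) * trig (Ls j) (x$j))" for x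
    by (simp add: power2_eq_square sum_product)
  have "(\<integral>x. (\<Sum>i\<in>UNIV. trig (Ls i) (x$i))\<^sup>2 \<partial>M) = (\<Sum>i\<in>UNIV. \<Sum>j\<in>UNIV. \<integral>x. trig (Ls i) (x$i) * trig (Ls j) (x$j) \<partial>M)"
    unfolding sq
    by (subst Bochner_Integration.integral_sum, auto intro!: Bochner_Integration.integrable_sum int_trig2
        simp: Bochner_Integration.integral_sum int_trig2)
  moreover have "(\<lambda>n. \<Sum>i\<in>UNIV. \<Sum>j\<in>UNIV. (rh i j)^n / fact n * beta n (Ls i) * beta n (Ls j))
      sums (\<Sum>i\<in>UNIV. \<Sum>j\<in>UNIV. \<integral>x. trig (Ls i) (x$i) * trig (Ls j) (x$j) \<partial>M)"
    by (intro sums_sum prod_series)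
  moreover have "quad_form (hadamard_pow (second_moment M) n) (\<chi> i. beta n (Ls i)) / fact n
      = (\<Sum>i\<in>UNIV. \<Sum>j\<in>UNIV. (rh i j)^n / fact n * beta n (Ls i) * beta n (Ls j))" for n
    unfolding quad_form_def hadamard_pow_def sum_divide_distrib by (intro sum.cong refl) (simp add: ac_simps)
  ultimately show ?thesis by simp
qed

end


interpretation G: gdens std_normal_distribution
proof (rule gdens.intro)
  show "prob_space std_normal_distribution" by (rule prob_space_normal_density) simp
  show "gdens_axioms std_normal_distribution" by unfold_locales simp
qed

lemma sum_sq_le:
  fixes a :: "'i \<Rightarrow> real"
  assumes "finite I"
  shows "(\<Sum>i\<in>I. a i)\<^sup>2 \<le> real (card I) * (\<Sum>i\<in>I. (a i)\<^sup>2)"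
proof -
  have "(\<Sum>i\<in>I. a i)\<^sup>2 = (\<Sum>i\<in>I. \<Sum>j\<in>I. a i * a j)" by (simp add: power2_eq_square sum_product)
  also have "\<dots> \<le> (\<Sum>i\<in>I. \<Sum>j\<in>I. (a i)\<^sup>2 / 2 + (a j)\<^sup>2 / 2)"
  proof (intro sum_mono)
    fix i j
    have "0 \<le> (a i - a j)\<^sup>2" by simp
    then show "a i * a j \<le> (a i)\<^sup>2 / 2 + (a j)\<^sup>2 / 2" by (simp add: power2_eq_square algebra_simps)
  qed
  also have "\<dots> = real (card I) * (\<Sum>i\<in>I. (a i)\<^sup>2)"
    by (simp add: sum.distrib sum_distrib_left[symmetric] sum_divide_distrib[symmetric] sum_constant)
  finally show ?thesis .
qed

lemma sq_split:
  fixes a b \<delta> :: real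
  assumes "\<delta> > 0"
  shows "a\<^sup>2 \<le> (1+\<delta>) * b\<^sup>2 + (1 + 1/\<delta>) * (a-b)\<^sup>2"
proof -
  define e where "e = a - b"
  have "0 \<le> (\<delta> * b - e)\<^sup>2" by simp
  then have h: "2*\<delta>*(b*e) \<le> \<delta>\<^sup>2*b\<^sup>2 + e\<^sup>2" by (simp add: power2_eq_square algebra_simps)
  have "2*(b*e) \<le> \<delta>*b\<^sup>2 + e\<^sup>2/\<delta>"
  proof -
    have "2*(b*e) = (2*\<delta>*(b*e))/\<delta>" using assms by simp
    also have "\<dots> \<le> (\<delta>\<^sup>2*b\<^sup>2 + e\<^sup>2)/\<delta>" using h assms by (intro divide_right_mono) auto
    also have "\<dots> = \<delta>*b\<^sup>2 + e\<^sup>2/\<delta>" using assms by (simp add: power2_eq_square field_simps)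
    finally show ?thesis .
  qed
  moreover have "a\<^sup>2 = b\<^sup>2 + 2*(b*e) + e\<^sup>2" unfolding e_def by (simp add: power2_eq_square algebra_simps)
  moreover have "(1+\<delta>) * b\<^sup>2 + (1 + 1/\<delta>) * (a-b)\<^sup>2 = b\<^sup>2 + \<delta>*b\<^sup>2 + e\<^sup>2 + e\<^sup>2/\<delta>"
    unfolding e_def by (simp add: algebra_simps)
  ultimately show ?thesis by linarith
qed

context gvec
begin

lemma psd: "0 \<le> quad_form (hadamard_pow (second_moment M) n) v"
proof (induction n arbitrary: v)
  case 0
  have "quad_form (hadamard_pow (second_moment M) 0) v = (\<Sum>i\<in>UNIV. v$i) * (\<Sum>j\<in>UNIV. v$j)"
    by (simp add: quad_form_def hadamard_pow_def sum_product)
  then show ?case by simp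
next
  case (Suc n)
  define w where "w x = (\<chi> i. v$i * x$i)" for x :: "real^'d"
  have int: "integrable M (\<lambda>x. (v$i * rh i j ^ n * v$j) * (x$i * x$j))" for i j
    using int_xx by simp
  have "(\<integral>x. quad_form (hadamard_pow (second_moment M) n) (w x) \<partial>M)
      = (\<integral>x. (\<Sum>i\<in>UNIV. \<Sum>j\<in>UNIV. (v$i * rh i j ^ n * v$j) * (x$i * x$j)) \<partial>M)"
    unfolding quad_form_def hadamard_pow_def w_def
    by (intro Bochner_Integration.integral_cong refl sum.cong) (simp_all add: ac_simps)
  also have "\<dots> = (\<Sum>i\<in>UNIV. \<integral>x. (\<Sum>j\<in>UNIV. (v$i * rh i j ^ n * v$j) * (x$i * x$j)) \<partial>M)"
    by (rule Bochner_Integration.integral_sum) (intro Bochner_Integration.integrable_sum int)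
  also have "\<dots> = (\<Sum>i\<in>UNIV. \<Sum>j\<in>UNIV. \<integral>x. (v$i * rh i j ^ n * v$j) * (x$i * x$j) \<partial>M)"
    by (intro sum.cong refl Bochner_Integration.integral_sum int)
  also have "\<dots> = (\<Sum>i\<in>UNIV. \<Sum>j\<in>UNIV. (v$i * rh i j ^ n * v$j) * rh i j)"
    by (simp add: second_moment_def)
  also have "\<dots> = quad_form (hadamard_pow (second_moment M) (Suc n)) v"
    unfolding quad_form_def hadamard_pow_def by (intro sum.cong refl) (simp add: ac_simps)
  finally have eq: "quad_form (hadamard_pow (second_moment M) (Suc n)) v
     = (\<integral>x. quad_form (hadamard_pow (second_moment M) n) (w x) \<partial>M)" ..
  have "0 \<le> (\<integral>x. quad_form (hadamard_pow (second_moment M) n) (w x) \<partial>M)"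
    by (intro Bochner_Integration.integral_nonneg) (use Suc.IH in auto)
  then show ?case unfolding eq .
qed

lemma sqi_coord:
  assumes "G.sqi H"
  shows "integrable M (\<lambda>x. (H (x$i))\<^sup>2)" "(\<integral>x. (H (x$i))\<^sup>2 \<partial>M) = (\<integral>y. (H y)\<^sup>2 \<partial>std_normal_distribution)"
proof -
  have [measurable]: "H \<in> borel_measurable borel" using assms unfolding G.sqi_def by simp
  have m: "(\<lambda>y. (H y)\<^sup>2) \<in> borel_measurable borel" by measurable
  show "integrable M (\<lambda>x. (H (x$i))\<^sup>2)" using intb_coord[OF m, of i] assms unfolding G.sqi_def by simp
  show "(\<integral>x. (H (x$i))\<^sup>2 \<partial>M) = (\<integral>y. (H y)\<^sup>2 \<partial>std_normal_distribution)" using int_coord[OF m, of i] by simp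
qed

lemma int_sumsq:
  assumes H: "\<And>i. G.sqi (H i)"
  shows "integrable M (\<lambda>x. (\<Sum>i\<in>UNIV. H i (x$i))\<^sup>2)"
    and "(\<integral>x. (\<Sum>i\<in>UNIV. H i (x$i))\<^sup>2 \<partial>M) \<le> real CARD('d) * (\<Sum>i\<in>UNIV. \<integral>y. (H i y)\<^sup>2 \<partial>std_normal_distribution)"
proof -
  have [measurable]: "H i \<in> borel_measurable borel" for i using H unfolding G.sqi_def by auto
  have m: "(\<lambda>x. (\<Sum>i\<in>UNIV. H i (x$i))\<^sup>2) \<in> borel_measurable M" unfolding measM by measurable
  have ib: "integrable M (\<lambda>x. real CARD('d) * (\<Sum>i\<in>UNIV. (H i (x$i))\<^sup>2))"
    using sqi_coord(1)[OF H] by auto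
  have pt: "(\<Sum>i\<in>UNIV. H i (x$i))\<^sup>2 \<le> real CARD('d) * (\<Sum>i\<in>UNIV. (H i (x$i))\<^sup>2)" for x
    using sum_sq_le[of UNIV "\<lambda>i. H i (x$i)"] by simp
  show i: "integrable M (\<lambda>x. (\<Sum>i\<in>UNIV. H i (x$i))\<^sup>2)"
  proof (rule Bochner_Integration.integrable_bound[OF ib m])
    show "AE x in M. norm ((\<Sum>i\<in>UNIV. H i (x$i))\<^sup>2) \<le> norm (real CARD('d) * (\<Sum>i\<in>UNIV. (H i (x$i))\<^sup>2))"
      using pt by (intro AE_I2) (simp add: abs_of_nonneg sum_nonneg order_trans[OF _ pt])
  qed
  have "(\<integral>x. (\<Sum>i\<in>UNIV. H i (x$i))\<^sup>2 \<partial>M) \<le> (\<integral>x. real CARD('d) * (\<Sum>i\<in>UNIV. (H i (x$i))\<^sup>2) \<partial>M)"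
    using i ib pt by (intro integral_mono) auto
  also have "\<dots> = real CARD('d) * (\<Sum>i\<in>UNIV. \<integral>y. (H i y)\<^sup>2 \<partial>std_normal_distribution)"
    using sqi_coord[OF H] by (simp add: Bochner_Integration.integral_sum)
  finally show "(\<integral>x. (\<Sum>i\<in>UNIV. H i (x$i))\<^sup>2 \<partial>M) \<le> real CARD('d) * (\<Sum>i\<in>UNIV. \<integral>y. (H i y)\<^sup>2 \<partial>std_normal_distribution)" .
qed

end


theorem mainTheorem5:
  fixes P Q :: "(real^'d::finite) measure"
  assumes "prob_space P" and "prob_space Q"
    and "sets P = sets borel" and "sets Q = sets borel"
    and "\<And>i. distributed P lborel (\<lambda>x. x$i) std_normal_density"
    and "\<And>i. distributed Q lborel (\<lambda>x. x$i) std_normal_density"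
    and "\<And>i j. jointly_gaussian P (\<lambda>x. x$i) (\<lambda>x. x$j)"
    and "\<And>i j. jointly_gaussian Q (\<lambda>x. x$i) (\<lambda>x. x$j)"
  shows "tau P Q (additive_class P) \<le>
    (SUP n::nat. SUP v::real^'d.
       ratio0 (ennreal (quad_form (hadamard_pow (second_moment Q) n) v))
              (ennreal (quad_form (hadamard_pow (second_moment P) n) v)))"
proof -
  have gP: "gvec P" using assms(1,3,5,7) by (intro gvec.intro gvec_axioms.intro) auto
  have gQ: "gvec Q" using assms(2,4,6,8) by (intro gvec.intro gvec_axioms.intro) auto
  interpret P: gvec P by (rule gP)
  interpret Q: gvec Q by (rule gQ)
  define qP where "qP n v = quad_form (hadamard_pow (second_moment P) n) v" for n v
  define qQ where "qQ n v = quad_form (hadamard_pow (second_moment Q) n) v" for n v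
  define C where "C = (SUP n::nat. SUP v::real^'d. ratio0 (ennreal (qQ n v)) (ennreal (qP n v)))"
  have "tau P Q (additive_class P) \<le> C"
  proof (cases "C = \<top>")
    case True then show ?thesis by simp
  next
    case False
    then obtain c where c: "C = ennreal c" "0 \<le> c" by (cases C rule: ennreal_cases) auto
    have key: "qQ n v \<le> c * qP n v" for n v
    proof -
      have r: "ratio0 (ennreal (qQ n v)) (ennreal (qP n v)) \<le> ennreal c"
      proof -
        have "ratio0 (ennreal (qQ n v)) (ennreal (qP n v)) \<le> (SUP v. ratio0 (ennreal (qQ n v)) (ennreal (qP n v)))"
          by (rule SUP_upper) simp
        also have "\<dots> \<le> C" unfolding C_def by (rule SUP_upper) simp
        finally show ?thesis using c by simp
      qed
      have pP: "0 \<le> qP n v" unfolding qP_def by (rule P.psd)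
      show ?thesis
      proof (cases "qQ n v \<le> 0")
        case True then show ?thesis using pP c(2) by (meson mult_nonneg_nonneg order_trans)
      next
        case False
        then have qQ0: "qQ n v > 0" by simp
        show ?thesis
        proof (cases "qP n v = 0")
          case True
          then have "ratio0 (ennreal (qQ n v)) (ennreal (qP n v)) = \<top>" using qQ0 by (simp add: ratio0_def)
          then show ?thesis using r by (simp add: top_unique)
        next
          case False
          then have qP0: "qP n v > 0" using pP by simp
          have "ratio0 (ennreal (qQ n v)) (ennreal (qP n v)) = ennreal (qQ n v / qP n v)"
            using qQ0 qP0 by (simp add: ratio0_def divide_ennreal)
          then have "qQ n v / qP n v \<le> c" using r c(2) by simp
          then show ?thesis using qP0 by (simp add: pos_divide_le_eq)
        qed
      qed
    qed
    have BQP: "(\<integral>x. (\<Sum>i\<in>UNIV. trig (Ls i) (x$i))\<^sup>2 \<partial>Q) \<le> c * (\<integral>x. (\<Sum>i\<in>UNIV. trig (Ls i) (x$i))\<^sup>2 \<partial>P)" for Ls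
    proof -
      have sQ: "(\<lambda>n. qQ n (\<chi> i. beta n (Ls i)) / fact n) sums (\<integral>x. (\<Sum>i\<in>UNIV. trig (Ls i) (x$i))\<^sup>2 \<partial>Q)"
        unfolding qQ_def by (rule Q.H_series)
      have sP: "(\<lambda>n. c * (qP n (\<chi> i. beta n (Ls i)) / fact n)) sums (c * (\<integral>x. (\<Sum>i\<in>UNIV. trig (Ls i) (x$i))\<^sup>2 \<partial>P))"
        unfolding qP_def by (intro sums_mult P.H_series)
      have "qQ n (\<chi> i. beta n (Ls i)) / fact n \<le> c * (qP n (\<chi> i. beta n (Ls i)) / fact n)" for n
        using divide_right_mono[OF key[of n "\<chi> i. beta n (Ls i)"], of "fact n"] by simp
      then show ?thesis by (intro sums_le[OF _ sQ sP])
    qed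
    show ?thesis unfolding c(1) tau_def
    proof (intro SUP_least)
      fix f g assume f: "f \<in> additive_class P" and g: "g \<in> additive_class P"
      obtain fs where fs: "f = (\<lambda>x. \<Sum>i\<in>UNIV. fs i (x$i))" "\<And>i. fs i \<in> borel_measurable borel"
        "\<And>i. (\<integral>\<^sup>+x. ennreal ((fs i (x$i))\<^sup>2) \<partial>P) < \<top>"
        using f unfolding additive_class_def by blast
      obtain gs where gs: "g = (\<lambda>x. \<Sum>i\<in>UNIV. gs i (x$i))" "\<And>i. gs i \<in> borel_measurable borel"
        "\<And>i. (\<integral>\<^sup>+x. ennreal ((gs i (x$i))\<^sup>2) \<partial>P) < \<top>"
        using g unfolding additive_class_def by blast
      have sq_of: "G.sqi u" if um: "u \<in> borel_measurable borel"
        and uf: "(\<integral>\<^sup>+x. ennreal ((u (x$i))\<^sup>2) \<partial>P) < \<top>" for u i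
      proof -
        have [measurable]: "u \<in> borel_measurable borel" by (rule um)
        have m2: "(\<lambda>y. (u y)\<^sup>2) \<in> borel_measurable borel" by measurable
        have "integrable P (\<lambda>x. (u (x$i))\<^sup>2)"
        proof (rule integrableI_nonneg)
          show "(\<lambda>x. (u (x$i))\<^sup>2) \<in> borel_measurable P" unfolding P.measM by measurable
          show "AE x in P. 0 \<le> (u (x$i))\<^sup>2" by simp
          show "(\<integral>\<^sup>+x. ennreal ((u (x$i))\<^sup>2) \<partial>P) < \<infinity>" using uf by simp
        qed
        then have "integrable std_normal_distribution (\<lambda>y. (u y)\<^sup>2)"
          using P.intb_coord[OF m2, of i] by simp
        then show ?thesis unfolding G.sqi_def using um by simp
      qed
      have sqf: "G.sqi (fs i)" for i by (rule sq_of[OF fs(2) fs(3)])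
      have sqg: "G.sqi (gs i)" for i by (rule sq_of[OF gs(2) gs(3)])
      define h where "h i y = fs i y - gs i y" for i y
      have sqh: "G.sqi (h i)" for i unfolding h_def by (rule G.sqi_lin1[OF sqf sqg])
      have fg: "f x - g x = (\<Sum>i\<in>UNIV. h i (x$i))" for x unfolding fs gs h_def by (simp add: sum_subtractf)
      define A where "A M = (\<integral>x. (\<Sum>i\<in>UNIV. h i (x$i))\<^sup>2 \<partial>M)" for M
      have nnQ: "(\<integral>\<^sup>+x. ennreal ((f x - g x)\<^sup>2) \<partial>Q) = ennreal (A Q)"
        unfolding fg A_def by (rule nn_integral_eq_integral[OF Q.int_sumsq(1)[of h, OF sqh]]) simp
      have nnP: "(\<integral>\<^sup>+x. ennreal ((f x - g x)\<^sup>2) \<partial>P) = ennreal (A P)"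
        unfolding fg A_def by (rule nn_integral_eq_integral[OF P.int_sumsq(1)[of h, OF sqh]]) simp
      have AP0: "0 \<le> A P" unfolding A_def by (intro Bochner_Integration.integral_nonneg) simp
      have AQ0: "0 \<le> A Q" unfolding A_def by (intro Bochner_Integration.integral_nonneg) simp
      have step: "A Q \<le> (1+\<delta>)\<^sup>2 * c * A P" if \<delta>: "\<delta> > 0" for \<delta>
      proof (rule field_le_epsilon)
        fix e :: real assume e: "e > 0"
        define K where "K = 1 + 1/\<delta>"
        have K0: "K \<ge> 0" unfolding K_def using \<delta> by simp
        define W where "W = ((1+\<delta>)*c*K + K) * (real CARD('d) * real CARD('d))"
        have W0: "W \<ge> 0" unfolding W_def using K0 c(2) \<delta> by simp
        define \<eta> where "\<eta> = e / (W + 1)"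
        have \<eta>0: "\<eta> > 0" unfolding \<eta>_def using e W0 by simp
        have "\<forall>i. \<exists>L. (\<integral>y. (h i y - trig L y)\<^sup>2 \<partial>std_normal_distribution) < \<eta>"
          using G.apx_all[OF sqh] \<eta>0 unfolding G.apx_def by blast
        from choice[OF this] obtain Ls where
          Ls: "\<And>i. (\<integral>y. (h i y - trig (Ls i) y)\<^sup>2 \<partial>std_normal_distribution) < \<eta>" by blast
        define T where "T x = (\<Sum>i\<in>UNIV. trig (Ls i) (x$i))" for x :: "real^'d"
        define Dd where "Dd i y = h i y - trig (Ls i) y" for i y
        have sqD: "G.sqi (Dd i)" for i unfolding Dd_def by (rule G.sqi_diff_trig[OF sqh])
        have sqT: "G.sqi (trig (Ls i))" for i by (rule G.sqi_trig)
        have HT: "(\<Sum>i\<in>UNIV. h i (x$i)) - T x = (\<Sum>i\<in>UNIV. Dd i (x$i))" for x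
          unfolding T_def Dd_def by (simp add: sum_subtractf)
        define D where "D M = (\<integral>x. (\<Sum>i\<in>UNIV. Dd i (x$i))\<^sup>2 \<partial>M)" for M
        define B where "B M = (\<integral>x. (T x)\<^sup>2 \<partial>M)" for M
        have sumeta: "(\<Sum>i\<in>UNIV. \<integral>y. (Dd i y)\<^sup>2 \<partial>std_normal_distribution) \<le> real CARD('d) * \<eta>"
        proof -
          have "(\<Sum>i\<in>UNIV. \<integral>y. (Dd i y)\<^sup>2 \<partial>std_normal_distribution) \<le> (\<Sum>i\<in>(UNIV::'d set). \<eta>)"
            using Ls unfolding Dd_def by (intro sum_mono) (simp add: less_imp_le)
          then show ?thesis by simp
        qed
        have cd0: "real CARD('d) \<ge> 0" by simp
        have DP: "D P \<le> real CARD('d) * real CARD('d) * \<eta>"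
          using order_trans[OF P.int_sumsq(2)[of Dd, OF sqD] mult_left_mono[OF sumeta cd0]] unfolding D_def
          by (simp add: mult.assoc)
        have DQ: "D Q \<le> real CARD('d) * real CARD('d) * \<eta>"
          using order_trans[OF Q.int_sumsq(2)[of Dd, OF sqD] mult_left_mono[OF sumeta cd0]] unfolding D_def
          by (simp add: mult.assoc)
        have splitQ: "A Q \<le> (1+\<delta>) * B Q + K * D Q"
        proof -
          have iH: "integrable Q (\<lambda>x. (\<Sum>i\<in>UNIV. h i (x$i))\<^sup>2)" by (rule Q.int_sumsq(1)[of h, OF sqh])
          have iT: "integrable Q (\<lambda>x. (T x)\<^sup>2)" unfolding T_def by (rule Q.int_sumsq(1)[of "\<lambda>i. trig (Ls i)", OF sqT])
          have iD: "integrable Q (\<lambda>x. (\<Sum>i\<in>UNIV. Dd i (x$i))\<^sup>2)" by (rule Q.int_sumsq(1)[of Dd, OF sqD])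
          have "A Q \<le> (\<integral>x. (1+\<delta>) * (T x)\<^sup>2 + K * (\<Sum>i\<in>UNIV. Dd i (x$i))\<^sup>2 \<partial>Q)"
            unfolding A_def
          proof (rule integral_mono)
            show "integrable Q (\<lambda>x. (1+\<delta>) * (T x)\<^sup>2 + K * (\<Sum>i\<in>UNIV. Dd i (x$i))\<^sup>2)" using iT iD by simp
            show "(\<Sum>i\<in>UNIV. h i (x$i))\<^sup>2 \<le> (1+\<delta>) * (T x)\<^sup>2 + K * (\<Sum>i\<in>UNIV. Dd i (x$i))\<^sup>2" for x
              using sq_split[OF \<delta>, of "\<Sum>i\<in>UNIV. h i (x$i)" "T x"] unfolding HT K_def .
          qed (rule iH)
          also have "\<dots> = (1+\<delta>) * B Q + K * D Q" unfolding B_def D_def using iT iD by simp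
          finally show ?thesis .
        qed
        have splitP: "B P \<le> (1+\<delta>) * A P + K * D P"
        proof -
          have iH: "integrable P (\<lambda>x. (\<Sum>i\<in>UNIV. h i (x$i))\<^sup>2)" by (rule P.int_sumsq(1)[of h, OF sqh])
          have iT: "integrable P (\<lambda>x. (T x)\<^sup>2)" unfolding T_def by (rule P.int_sumsq(1)[of "\<lambda>i. trig (Ls i)", OF sqT])
          have iD: "integrable P (\<lambda>x. (\<Sum>i\<in>UNIV. Dd i (x$i))\<^sup>2)" by (rule P.int_sumsq(1)[of Dd, OF sqD])
          have "B P \<le> (\<integral>x. (1+\<delta>) * (\<Sum>i\<in>UNIV. h i (x$i))\<^sup>2 + K * (\<Sum>i\<in>UNIV. Dd i (x$i))\<^sup>2 \<partial>P)"
            unfolding B_def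
          proof (rule integral_mono)
            show "integrable P (\<lambda>x. (1+\<delta>) * (\<Sum>i\<in>UNIV. h i (x$i))\<^sup>2 + K * (\<Sum>i\<in>UNIV. Dd i (x$i))\<^sup>2)" using iH iD by simp
            show "(T x)\<^sup>2 \<le> (1+\<delta>) * (\<Sum>i\<in>UNIV. h i (x$i))\<^sup>2 + K * (\<Sum>i\<in>UNIV. Dd i (x$i))\<^sup>2" for x
            proof -
              have "(T x - (\<Sum>i\<in>UNIV. h i (x$i)))\<^sup>2 = (\<Sum>i\<in>UNIV. Dd i (x$i))\<^sup>2"
                using power2_commute[of "T x" "\<Sum>i\<in>UNIV. h i (x$i)"] HT[of x] by simp
              then show ?thesis
                using sq_split[OF \<delta>, of "T x" "\<Sum>i\<in>UNIV. h i (x$i)"] unfolding K_def by simp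
            qed
          qed (rule iT)
          also have "\<dots> = (1+\<delta>) * A P + K * D P" unfolding A_def D_def using iH iD by simp
          finally show ?thesis .
        qed
        have BQ: "B Q \<le> c * B P" unfolding B_def T_def by (rule BQP)
        have d1: "1 + \<delta> \<ge> 0" using \<delta> by simp
        have "A Q \<le> (1+\<delta>) * B Q + K * D Q" by (rule splitQ)
        also have "\<dots> \<le> (1+\<delta>) * (c * B P) + K * D Q"
          using BQ d1 by (intro add_right_mono mult_left_mono) auto
        also have "\<dots> \<le> (1+\<delta>) * (c * ((1+\<delta>) * A P + K * D P)) + K * D Q"
          using splitP d1 c(2) by (intro add_right_mono mult_left_mono) auto
        also have "\<dots> = (1+\<delta>)\<^sup>2 * c * A P + ((1+\<delta>) * c * K * D P + K * D Q)"
          by (simp add: power2_eq_square algebra_simps)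
        also have "\<dots> \<le> (1+\<delta>)\<^sup>2 * c * A P + ((1+\<delta>) * c * K * (real CARD('d) * real CARD('d) * \<eta>) + K * (real CARD('d) * real CARD('d) * \<eta>))"
          using DP DQ K0 d1 c(2) by (intro add_left_mono add_mono mult_left_mono) auto
        also have "\<dots> = (1+\<delta>)\<^sup>2 * c * A P + W * \<eta>" unfolding W_def by (simp add: algebra_simps)
        also have "\<dots> \<le> (1+\<delta>)\<^sup>2 * c * A P + e"
        proof -
          have "W * \<eta> = e * (W / (W + 1))" unfolding \<eta>_def by simp
          also have "\<dots> \<le> e * 1" using W0 e by (intro mult_left_mono) auto
          finally show ?thesis by simp
        qed
        finally show "A Q \<le> (1+\<delta>)\<^sup>2 * c * A P + e" .
      qed
      have main: "A Q \<le> c * A P"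
      proof (rule field_le_epsilon)
        fix e :: real assume e: "e > 0"
        define \<delta> where "\<delta> = min 1 (e / (3 * c * A P + 1))"
        have cA: "0 \<le> c * A P" using c(2) AP0 by simp
        have \<delta>0: "\<delta> > 0" "\<delta> \<le> 1" unfolding \<delta>_def using e cA by auto
        have "A Q \<le> (1+\<delta>)\<^sup>2 * c * A P" by (rule step[OF \<delta>0(1)])
        also have "\<dots> = c * A P + (2*\<delta> + \<delta>*\<delta>) * (c * A P)" by (simp add: power2_eq_square algebra_simps)
        also have "\<dots> \<le> c * A P + (3*\<delta>) * (c * A P)"
          using \<delta>0 cA by (intro add_left_mono mult_right_mono) (auto simp: mult_left_le)
        also have "\<dots> \<le> c * A P + e"
        proof -
          have "\<delta> \<le> e / (3 * c * A P + 1)" unfolding \<delta>_def by simp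
          then have "3 * \<delta> * (c * A P) \<le> 3 * (e / (3 * c * A P + 1)) * (c * A P)"
            using cA by (intro mult_right_mono) auto
          also have "\<dots> = e * (3 * c * A P / (3 * c * A P + 1))" by (simp add: algebra_simps)
          also have "\<dots> \<le> e * 1" using cA e by (intro mult_left_mono) auto
          finally show ?thesis by simp
        qed
        finally show "A Q \<le> c * A P + e" .
      qed
      show "ratio0 (\<integral>\<^sup>+x. ennreal ((f x - g x)\<^sup>2) \<partial>Q) (\<integral>\<^sup>+x. ennreal ((f x - g x)\<^sup>2) \<partial>P) \<le> ennreal c"
        unfolding nnQ nnP
      proof (cases "A Q = 0")
        case True then show "ratio0 (ennreal (A Q)) (ennreal (A P)) \<le> ennreal c" by (simp add: ratio0_def)
      next
        case False
        then have aq: "A Q > 0" using AQ0 by simp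
        then have ap: "A P > 0" using main AP0 c(2)
          by (metis mult_zero_right not_le order.antisym)
        have "ratio0 (ennreal (A Q)) (ennreal (A P)) = ennreal (A Q / A P)"
          using aq ap by (simp add: ratio0_def divide_ennreal)
        also have "\<dots> \<le> ennreal c"
          using main ap by (intro ennreal_leI) (simp add: pos_divide_le_eq mult.commute)
        finally show "ratio0 (ennreal (A Q)) (ennreal (A P)) \<le> ennreal c" .
      qed
    qed
  qed
  then show ?thesis unfolding C_def qP_def qQ_def .
qed


end
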